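(* Let $\mathcal L$ be a finite distributive lattice and $i$ an integer, and let $\mathcal L_{i,i}=\{p\in\mathcal L:\operatorname{rank}p=i\}$. If $|\mathcal L_{i,i}|>1$, then the ideal $H_{\mathcal L_{i,i}}$ has no linear resolution.
   Context: A finite distributive lattice is graded, with rank function $\operatorname{rank}$ ($0$ at the minimum, increasing by $1$ along cover relations). Let $P$ be the set of join-irreducible elements of $\mathcal L$ (elements with exactly one lower neighbor); for $p\in\mathcal L$ put $\ell(p)=\{q\in P:q\le p\}$. Let $K$ be a field, $S=K[x_p,y_p:p\in P]$ with all variables of degree 1, $u_q=\prod_{p\in\ell(q)}x_p\prod_{p\in P\setminus\ell(q)}y_p$, and for $\mathcal S\subseteq\mathcal L$ let $H_{\mathcal S}=(u_q:q\in\mathcal S)$. A graded ideal has a linear resolution if all minimal generators have a common degree $d$ and the $i$-th module of its graded minimal free resolution is generated in degree $d+i$. *)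

theory Defs
  imports "HOL-Library.Poly_Mapping"
begin

definition covers :: "'a::order \<Rightarrow> 'a \<Rightarrow> bool" where
  "covers q p \<longleftrightarrow> q < p \<and> \<not> (\<exists>r. q < r \<and> r < p)"

text \<open>Rank: the length of a maximal chain from the minimum to p, i.e. the maximal
  number of elements of a chain strictly below p (0 at the minimum, +1 along covers
  in a graded poset).\<close>
definition lrank :: "'a::{finite,order} \<Rightarrow> nat" where
  "lrank p = Max {card C | C. C \<subseteq> {q. q < p} \<and> (\<forall>x\<in>C. \<forall>y\<in>C. x \<le> y \<or> y \<le> x)}"

definition join_irr :: "'a::{finite,order} set" where
  "join_irr = {p. card {q. covers q p} = 1}"

definition lideal :: "'a::{finite,order} \<Rightarrow> 'a set" where
  "lideal p = {q \<in> join_irr. q \<le> p}"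

text \<open>Polynomials over 'k in variables of type 'v: finitely supported maps from
  monomials (exponent vectors 'v \<Rightarrow>0 nat) to coefficients. Variables x_p = Inl p,
  y_p = Inr p.\<close>

type_synonym ('v, 'k) mpoly = "('v \<Rightarrow>\<^sub>0 nat) \<Rightarrow>\<^sub>0 'k"

definition Var :: "'v \<Rightarrow> ('v, 'k::field) mpoly" where
  "Var v = Poly_Mapping.single (Poly_Mapping.single v 1) 1"

definition mdeg :: "('v \<Rightarrow>\<^sub>0 nat) \<Rightarrow> nat" where
  "mdeg m = (\<Sum>v\<in>Poly_Mapping.keys m. Poly_Mapping.lookup m v)"

text \<open>Homogeneous of degree d (the zero polynomial is homogeneous of every degree).\<close>
definition homog :: "nat \<Rightarrow> ('v, 'k::field) mpoly \<Rightarrow> bool" where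
  "homog d f \<longleftrightarrow> (\<forall>m\<in>Poly_Mapping.keys f. mdeg m = d)"

definition polyring :: "'v set \<Rightarrow> ('v, 'k::field) mpoly set" where
  "polyring V = {f. \<forall>m\<in>Poly_Mapping.keys f. Poly_Mapping.keys m \<subseteq> V}"

definition ideal_gen :: "'v set \<Rightarrow> ('v, 'k::field) mpoly set \<Rightarrow> ('v, 'k) mpoly set" where
  "ideal_gen V G = {\<Sum>g\<in>G'. c g * g | G' c. finite G' \<and> G' \<subseteq> G \<and> (\<forall>g\<in>G'. c g \<in> polyring V)}"

text \<open>Free modules S^b are represented by vectors nat \<Rightarrow> poly with entries in S and
  vanishing at indices \<ge> b.  A differential F_i \<rightarrow> F_(i-1) is a matrix M (M j k is the
  j-th coordinate of the image of the k-th basis vector).\<close>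

definition fvecs :: "'v set \<Rightarrow> nat \<Rightarrow> (nat \<Rightarrow> ('v, 'k::field) mpoly) set" where
  "fvecs V b = {v. (\<forall>k. v k \<in> polyring V) \<and> (\<forall>k\<ge>b. v k = 0)}"

definition matmul :: "nat \<Rightarrow> (nat \<Rightarrow> nat \<Rightarrow> ('v, 'k::field) mpoly) \<Rightarrow> (nat \<Rightarrow> ('v, 'k) mpoly)
    \<Rightarrow> (nat \<Rightarrow> ('v, 'k) mpoly)" where
  "matmul b M v = (\<lambda>j. \<Sum>k<b. M j k * v k)"

text \<open>A graded ideal I of S = K[x_v : v \<in> V] has a linear resolution iff it has a
  graded free resolution
    ... \<rightarrow> F_2 \<rightarrow> F_1 \<rightarrow> F_0 \<rightarrow> I \<rightarrow> 0,  F_i = S(-d-i)^(b i),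
  i.e. F_0 \<rightarrow> I sends the basis vectors to homogeneous generators g_j of degree d,
  and the degree-preserving differentials F_i \<rightarrow> F_(i-1) (i \<ge> 1) are given by
  matrices of linear forms.  Such a resolution is automatically minimal (all matrix
  entries lie in the irrelevant maximal ideal), hence it is the graded minimal free
  resolution, and its i-th module is generated in degree d+i.  Conversely the
  minimal resolution of an ideal with linear resolution has this form.\<close>
definition has_linear_resolution :: "'v set \<Rightarrow> ('v, 'k::field) mpoly set \<Rightarrow> bool" where
  "has_linear_resolution V I \<longleftrightarrow>
    (\<exists>(d::nat) (b::nat \<Rightarrow> nat) (g::nat \<Rightarrow> ('v, 'k) mpoly)
        (M::nat \<Rightarrow> nat \<Rightarrow> nat \<Rightarrow> ('v, 'k) mpoly).
       (\<forall>j<b 0. g j \<in> polyring V \<and> homog d (g j)) \<and>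
       {\<Sum>j<b 0. v j * g j | v. v \<in> fvecs V (b 0)} = I \<and>
       (\<forall>i\<ge>1. \<forall>j k. M i j k \<in> polyring V \<and> homog 1 (M i j k)) \<and>
       {v \<in> fvecs V (b 0). (\<Sum>j<b 0. v j * g j) = 0}
          = (\<lambda>w. \<lambda>j. if j < b 0 then matmul (b 1) (M 1) w j else 0) ` fvecs V (b 1) \<and>
       (\<forall>i\<ge>1. {v \<in> fvecs V (b i). (\<forall>j<b (i - 1). matmul (b i) (M i) v j = 0)}
          = (\<lambda>w. \<lambda>j. if j < b i then matmul (b (Suc i)) (M (Suc i)) w j else 0)
              ` fvecs V (b (Suc i))))"

definition u_mon :: "'a::{finite,order} \<Rightarrow> ('a + 'a, 'k::field) mpoly" where
  "u_mon q = (\<Prod>p\<in>lideal q. Var (Inl p)) * (\<Prod>p\<in>join_irr - lideal q. Var (Inr p))"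

definition Svars :: "('a::{finite,order} + 'a) set" where
  "Svars = Inl ` join_irr \<union> Inr ` join_irr"

definition H_ideal :: "'a::{finite,order} set \<Rightarrow> ('a + 'a, 'k::field) mpoly set" where
  "H_ideal T = ideal_gen Svars (u_mon ` T)"

end

theory Submission
  imports Defs
begin

lemma lideal_le:
  fixes p q :: "'a::{finite,lattice}"
  assumes "lideal p \<subseteq> lideal q" shows "p \<le> q"
  using assms
proof (induction "card {r. r < p}" arbitrary: p rule: less_induct)
  case less
  show ?case
  proof (cases "\<exists>x. x < p")
    case False
    then have "inf p q = p" using inf_le1 [of p q] order.not_eq_order_implies_strict by blast
    then show ?thesis by (simp add: le_iff_inf)
  next
    case True
    then obtain x where x: "x < p" by blast
    have ex_cov: "\<exists>c. covers c p"
    proof -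
      let ?A = "{r. x \<le> r \<and> r < p}"
      have "finite ?A" "?A \<noteq> {}" using x by auto
      then obtain c where c: "c \<in> ?A" "\<forall>b\<in>?A. c \<le> b \<longrightarrow> c = b" using finite_has_maximal by blast
      have "covers c p" unfolding covers_def
      proof (intro conjI)
        show "c < p" using c(1) by simp
        show "\<not> (\<exists>r. c < r \<and> r < p)"
        proof
          assume "\<exists>r. c < r \<and> r < p"
          then obtain r where r: "c < r" "r < p" by blast
          have "x \<le> r" using c(1) r(1) by (auto intro: order.trans less_imp_le)
          then have "r \<in> ?A" using r(2) by simp
          then have "c = r" using c(2) r(1) less_imp_le by blast
          then show False using r(1) by simp
        qed
      qed
      then show ?thesis by blast
    qed
    show ?thesis
    proof (cases "p \<in> join_irr")
      case True
      then have "p \<in> lideal p" by (simp add: lideal_def)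
      then show ?thesis using less.prems by (auto simp: lideal_def)
    next
      case False
      then have c1: "card {c. covers c p} \<noteq> 1" by (simp add: join_irr_def)
      from ex_cov obtain a where a: "covers a p" by blast
      have "{c. covers c p} \<noteq> {a}" using c1 by (metis card.empty card.insert empty_iff finite.emptyI One_nat_def)
      with a obtain b where b: "covers b p" "b \<noteq> a" by blast
      have sab: "sup a b = p"
      proof (rule ccontr)
        assume ne: "sup a b \<noteq> p"
        have "sup a b \<le> p" using a b by (simp add: covers_def less_imp_le)
        then have lt: "sup a b < p" using ne by (simp add: less_le)
        show False
        proof (cases "sup a b = a")
          case True
          have "b \<le> a" using True sup_ge2[of b a] by simp
          then have "b < a" using b(2) by (simp add: less_le)
          then show False using b(1) a unfolding covers_def by blast
        next
          case False
          then have "a < sup a b" using sup_ge1[of a b] by (simp add: less_le)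
          then show False using lt a unfolding covers_def by blast
        qed
      qed
      have IH: "y \<le> q" if "covers y p" for y
      proof -
        have yp: "y < p" using that by (simp add: covers_def)
        have "{r. r < y} \<subset> {r. r < p}" using yp by auto
        then have "card {r. r < y} < card {r. r < p}" by (simp add: psubset_card_mono)
        moreover have "lideal y \<subseteq> lideal q" using less.prems yp by (auto simp: lideal_def)
        ultimately show ?thesis using less.hyps by blast
      qed
      show ?thesis using le_supI[OF IH[OF a] IH[OF b(1)]] sab by simp
    qed
  qed
qed

lemma lrank_mono:
  fixes p q :: "'a::{finite,order}"
  assumes "p < q" shows "lrank p < lrank q"
proof -
  define S where "S x = {card C | C. C \<subseteq> {r. r < x} \<and> (\<forall>x\<in>C. \<forall>y\<in>C. x \<le> y \<or> y \<le> x)}" for x :: 'a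
  have fin: "finite (S x)" for x
    by (rule finite_subset[of _ "card ` Pow UNIV"]) (auto simp: S_def)
  have z: "0 \<in> S x" for x
    unfolding S_def by (rule CollectI, rule exI[of _ "{}"]) simp
  have ne: "S x \<noteq> {}" for x using z by blast
  have lr: "lrank x = Max (S x)" for x by (simp add: lrank_def S_def)
  have "lrank p \<in> S p" using Max_in[OF fin ne] lr by simp
  then obtain C where C: "lrank p = card C" "C \<subseteq> {r. r < p}" "\<forall>x\<in>C. \<forall>y\<in>C. x \<le> y \<or> y \<le> x"
    by (auto simp: S_def)
  have "p \<notin> C" using C(2) by auto
  then have "card (insert p C) = Suc (card C)" by simp
  moreover have "insert p C \<subseteq> {r. r < q}" using C(2) assms by (auto intro: less_trans)
  moreover have "\<forall>x\<in>insert p C. \<forall>y\<in>insert p C. x \<le> y \<or> y \<le> x" using C(2,3) by (auto intro: less_imp_le)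
  ultimately have "Suc (lrank p) \<in> S q" unfolding S_def
    by (intro CollectI exI[of _ "insert p C"]) (simp add: C(1))
  then have "Suc (lrank p) \<le> Max (S q)" using fin by simp
  then show ?thesis using lr by simp
qed


lemma keys_neg: "Poly_Mapping.keys (- f) = Poly_Mapping.keys (f :: 'a \<Rightarrow>\<^sub>0 'b::ab_group_add)"
  by (auto simp: in_keys_iff)

lemma keys_sum_sub: "Poly_Mapping.keys (\<Sum>x\<in>A. f x) \<subseteq> (\<Union>x\<in>A. Poly_Mapping.keys (f x))"
proof (induction A rule: infinite_finite_induct)
  case (insert x F)
  then show ?case using keys_add[of "f x" "sum f F"] by auto
qed auto

lemma mdeg_superset:
  "finite S \<Longrightarrow> Poly_Mapping.keys m \<subseteq> S \<Longrightarrow> mdeg m = (\<Sum>v\<in>S. Poly_Mapping.lookup m v)"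
  unfolding mdeg_def by (rule sum.mono_neutral_left) (auto simp: in_keys_iff)

lemma mdeg_add: "mdeg (a + b) = mdeg a + mdeg b"
proof -
  let ?S = "Poly_Mapping.keys a \<union> Poly_Mapping.keys b"
  have "mdeg (a + b) = (\<Sum>v\<in>?S. Poly_Mapping.lookup (a + b) v)"
    using keys_add[of a b] by (intro mdeg_superset) auto
  also have "\<dots> = (\<Sum>v\<in>?S. Poly_Mapping.lookup a v) + (\<Sum>v\<in>?S. Poly_Mapping.lookup b v)"
    by (simp add: lookup_add sum.distrib)
  also have "\<dots> = mdeg a + mdeg b"
    by (subst (1 2) mdeg_superset[of ?S]) auto
  finally show ?thesis .
qed

lemma mdeg_zero [simp]: "mdeg 0 = 0"
  by (simp add: mdeg_def)

lemma mdeg_sum: "mdeg (\<Sum>x\<in>A. f x) = (\<Sum>x\<in>A. mdeg (f x))"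
  by (induction A rule: infinite_finite_induct) (auto simp: mdeg_add)

lemma mdeg_single [simp]: "mdeg (Poly_Mapping.single v n) = n"
  by (simp add: mdeg_def)

lemma mdeg_eq0: "mdeg m = 0 \<Longrightarrow> m = 0"
proof (rule poly_mapping_eqI)
  fix k assume "mdeg m = 0"
  then have "\<forall>v\<in>Poly_Mapping.keys m. Poly_Mapping.lookup m v = 0"
    by (simp add: mdeg_def)
  then show "Poly_Mapping.lookup m k = Poly_Mapping.lookup 0 k"
    by (auto simp: in_keys_iff)
qed

lemma mdeg_two:
  assumes "x \<noteq> y" shows "Poly_Mapping.lookup m x + Poly_Mapping.lookup m y \<le> mdeg m"
proof -
  have "mdeg m = (\<Sum>v\<in>Poly_Mapping.keys m \<union> {x, y}. Poly_Mapping.lookup m v)"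
    by (rule mdeg_superset) auto
  moreover have "(\<Sum>v\<in>{x,y}. Poly_Mapping.lookup m v) \<le> (\<Sum>v\<in>Poly_Mapping.keys m \<union> {x, y}. Poly_Mapping.lookup m v)"
    by (rule sum_mono2) auto
  ultimately show ?thesis using assms by simp
qed

lemma lookup_mult_uniq:
  fixes f g :: "('v \<Rightarrow>\<^sub>0 nat) \<Rightarrow>\<^sub>0 'k::field"
  assumes k: "k = a0 + b0"
    and u: "\<And>a b. a \<in> Poly_Mapping.keys f \<Longrightarrow> b \<in> Poly_Mapping.keys g \<Longrightarrow> a + b = k \<Longrightarrow> a = a0 \<and> b = b0"
  shows "Poly_Mapping.lookup (f * g) k = Poly_Mapping.lookup f a0 * Poly_Mapping.lookup g b0"
proof -
  have inner: "Poly_Mapping.lookup f l * (\<Sum>q. Poly_Mapping.lookup g q when k = l + q)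
      = (if l = a0 then Poly_Mapping.lookup f a0 * Poly_Mapping.lookup g b0 else 0)" for l
  proof (cases "Poly_Mapping.lookup f l = 0")
    case True then show ?thesis by auto
  next
    case False
    then have l: "l \<in> Poly_Mapping.keys f" by (simp add: in_keys_iff)
    have "(\<lambda>q. Poly_Mapping.lookup g q when k = l + q)
        = (\<lambda>q. if q = b0 then (if l = a0 then Poly_Mapping.lookup g b0 else 0) else 0)"
    proof
      fix q show "(Poly_Mapping.lookup g q when k = l + q) = (if q = b0 then (if l = a0 then Poly_Mapping.lookup g b0 else 0) else 0)"
      proof (cases "Poly_Mapping.lookup g q = 0")
        case True then show ?thesis by (auto simp: when_def)
      next
        case False
        then have "q \<in> Poly_Mapping.keys g" by (simp add: in_keys_iff)
        then show ?thesis using u[OF l] k by (auto simp: when_def)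
      qed
    qed
    note eq = this
    have "(\<Sum>q. Poly_Mapping.lookup g q when k = l + q) = (if l = a0 then Poly_Mapping.lookup g b0 else 0)"
      unfolding eq by (rule Sum_any.delta)
    then show ?thesis by simp
  qed
  show ?thesis by (simp add: lookup_mult inner)
qed


lemma main_alg:
  fixes g :: "nat \<Rightarrow> ('v, 'k::field) mpoly" and M :: "nat \<Rightarrow> nat \<Rightarrow> nat \<Rightarrow> ('v, 'k) mpoly"
    and mn :: "'q \<Rightarrow> ('v \<Rightarrow>\<^sub>0 nat)" and T :: "'q set" and I :: "('v, 'k) mpoly set"
  assumes mdeg_mn: "\<And>q. q \<in> T \<Longrightarrow> mdeg (mn q) = n"
  and sep: "\<And>q q'. q \<in> T \<Longrightarrow> q' \<in> T \<Longrightarrow> mn q \<noteq> mn q' \<Longrightarrow>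
      \<exists>x y. x \<noteq> y \<and> Poly_Mapping.lookup (mn q') x < Poly_Mapping.lookup (mn q) x
        \<and> Poly_Mapping.lookup (mn q') y < Poly_Mapping.lookup (mn q) y"
  and Ikeys: "\<And>f m. f \<in> I \<Longrightarrow> m \<in> Poly_Mapping.keys f \<Longrightarrow> \<exists>q\<in>T. \<exists>a. m = a + mn q"
  and gens: "\<And>q. q \<in> T \<Longrightarrow> Poly_Mapping.single (mn q) 1 \<in> I"
  and two: "p \<in> T" "p' \<in> T" "mn p \<noteq> mn p'"
  and hg: "\<forall>j<b 0. g j \<in> polyring V \<and> homog d (g j)"
  and hI: "{\<Sum>j<b 0. v j * g j | v. v \<in> fvecs V (b 0)} = I"
  and hM: "\<forall>i\<ge>1. \<forall>j k. M i j k \<in> polyring V \<and> homog 1 (M i j k)"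
  and hK: "{v \<in> fvecs V (b 0). (\<Sum>j<b 0. v j * g j) = 0}
          = (\<lambda>w. \<lambda>j. if j < b 0 then matmul (b 1) (M 1) w j else 0) ` fvecs V (b 1)"
  shows False
proof -
  have pol1: "(1::('v, 'k) mpoly) \<in> polyring V" by (simp add: polyring_def)
  have pol0: "(0::('v, 'k) mpoly) \<in> polyring V" by (simp add: polyring_def)
  have polc: "Poly_Mapping.single 0 c \<in> polyring V" for c :: 'k by (simp add: polyring_def)
  have polneg: "f \<in> polyring V \<Longrightarrow> - f \<in> polyring V" for f :: "('v, 'k) mpoly"
    by (simp add: polyring_def keys_neg)
  have hom: "j < b 0 \<Longrightarrow> m \<in> Poly_Mapping.keys (g j) \<Longrightarrow> mdeg m = d" for j m
    using hg by (auto simp: homog_def)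
  have homM: "m \<in> Poly_Mapping.keys (M 1 j k) \<Longrightarrow> mdeg m = 1" for j k m
    using hM by (auto simp: homog_def)
  have gI: "g j \<in> I" if j: "j < b 0" for j
  proof -
    have "(\<lambda>k. if k = j then 1 else (0::('v, 'k) mpoly)) \<in> fvecs V (b 0)" using pol1 pol0 j by (auto simp: fvecs_def)
    moreover have "(\<Sum>k<b 0. (if k = j then 1 else 0) * g k) = (\<Sum>k<b 0. if k = j then g k else 0)"
      by (rule sum.cong) auto
    then have "(\<Sum>k<b 0. (if k = j then 1 else 0) * g k) = g j" using j by simp
    ultimately show ?thesis using hI by force
  qed
  have dn: "d \<le> n"
  proof -
    from gens[OF two(1)] hI obtain v where v: "v \<in> fvecs V (b 0)"
      "Poly_Mapping.single (mn p) 1 = (\<Sum>j<b 0. v j * g j)" by force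
    have "mn p \<in> Poly_Mapping.keys (Poly_Mapping.single (mn p) (1::'k))" by simp
    then have "mn p \<in> (\<Union>j\<in>{..<b 0}. Poly_Mapping.keys (v j * g j))" using v(2) keys_sum_sub by (metis subsetD)
    then obtain j where j: "j < b 0" "mn p \<in> Poly_Mapping.keys (v j * g j)" by blast
    then obtain a bb where "mn p = a + bb" "bb \<in> Poly_Mapping.keys (g j)" using keys_mult by blast
    then show ?thesis using mdeg_add[of a bb] hom[OF j(1)] mdeg_mn[OF two(1)] by auto
  qed
  have gkeys: "Poly_Mapping.keys (g j) \<subseteq> mn ` T" if j: "j < b 0" for j
  proof
    fix m assume m: "m \<in> Poly_Mapping.keys (g j)"
    from Ikeys[OF gI[OF j] m] obtain q a where q: "q \<in> T" "m = a + mn q" by blast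
    have "mdeg m = mdeg a + n" using q mdeg_add[of a "mn q"] mdeg_mn[OF q(1)] by simp
    then have "mdeg a = 0" using hom[OF j m] dn by simp
    then have "a = 0" by (rule mdeg_eq0)
    then show "m \<in> mn ` T" using q by simp
  qed
  have lookD: "Poly_Mapping.lookup (v * h) (mn q) = Poly_Mapping.lookup v 0 * Poly_Mapping.lookup h (mn q)"
    if h: "Poly_Mapping.keys h \<subseteq> mn ` T" and q: "q \<in> T" for v h :: "('v, 'k) mpoly" and q
  proof (rule lookup_mult_uniq)
    show "mn q = 0 + mn q" by simp
    fix a bb assume a: "a \<in> Poly_Mapping.keys v" and bb: "bb \<in> Poly_Mapping.keys h" and e: "a + bb = mn q"
    from bb h obtain q' where q': "q' \<in> T" "bb = mn q'" by blast
    have "mdeg a + n = n" using e q' q mdeg_add[of a bb] mdeg_mn by simp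
    then have "a = 0" using mdeg_eq0 by simp
    then show "a = 0 \<and> bb = mn q" using e by simp
  qed
  have lookE: "Poly_Mapping.lookup (c * h) (e + mn q) = Poly_Mapping.lookup c e * Poly_Mapping.lookup h (mn q)"
    if c: "\<And>m. m \<in> Poly_Mapping.keys c \<Longrightarrow> mdeg m = 1" and h: "Poly_Mapping.keys h \<subseteq> mn ` T"
      and q: "q \<in> T" and e1: "mdeg e = 1" for c h :: "('v, 'k) mpoly" and q e
  proof (rule lookup_mult_uniq)
    show "e + mn q = e + mn q" by simp
    fix a bb assume a: "a \<in> Poly_Mapping.keys c" and bb: "bb \<in> Poly_Mapping.keys h" and eq: "a + bb = e + mn q"
    from bb h obtain q' where q': "q' \<in> T" "bb = mn q'" by blast
    have eqm: "mn q' = mn q"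
    proof (rule ccontr)
      assume "mn q' \<noteq> mn q"
      then have "mn q \<noteq> mn q'" by simp
      from sep[OF q q'(1) this] obtain x y where xy: "x \<noteq> y"
        "Poly_Mapping.lookup (mn q') x < Poly_Mapping.lookup (mn q) x"
        "Poly_Mapping.lookup (mn q') y < Poly_Mapping.lookup (mn q) y" by blast
      have lx: "Poly_Mapping.lookup a z + Poly_Mapping.lookup (mn q') z = Poly_Mapping.lookup e z + Poly_Mapping.lookup (mn q) z" for z
        using arg_cong[OF eq, of "\<lambda>m. Poly_Mapping.lookup m z"] q'(2) by (simp add: lookup_add)
      have "1 \<le> Poly_Mapping.lookup a x" using lx[of x] xy(2) by linarith
      moreover have "1 \<le> Poly_Mapping.lookup a y" using lx[of y] xy(3) by linarith
      ultimately have "2 \<le> mdeg a" using mdeg_two[OF xy(1), of a] by linarith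
      then show False using c[OF a] by simp
    qed
    then have "a + mn q = e + mn q" using eq q'(2) by simp
    then have "a = e" by simp
    then show "a = e \<and> bb = mn q" using eqm q'(2) by simp
  qed
  have lookS: "Poly_Mapping.lookup (Poly_Mapping.single 0 s * h) m = s * Poly_Mapping.lookup h m"
    for s :: 'k and h :: "('v, 'k) mpoly" and m
  proof -
    have "Poly_Mapping.lookup (Poly_Mapping.single 0 s * h) (0 + m) = Poly_Mapping.lookup (Poly_Mapping.single (0::('v \<Rightarrow>\<^sub>0 nat)) s) 0 * Poly_Mapping.lookup h m"
      by (rule lookup_mult_uniq[of "0 + m" 0 m]) (auto split: if_splits)
    then show ?thesis by simp
  qed
  have indep: "\<alpha> j = 0" if sz: "(\<Sum>j<b 0. Poly_Mapping.single 0 (\<alpha> j) * g j) = 0" and j: "j < b 0" for \<alpha> j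
  proof -
    define w where "w = (\<lambda>j. if j < b 0 then Poly_Mapping.single 0 (\<alpha> j) else (0::('v, 'k) mpoly))"
    have "w \<in> fvecs V (b 0)" using polc pol0 by (auto simp: fvecs_def w_def)
    moreover have "(\<Sum>j<b 0. w j * g j) = 0" using sz by (simp add: w_def)
    ultimately have "w \<in> (\<lambda>w. \<lambda>j. if j < b 0 then matmul (b 1) (M 1) w j else 0) ` fvecs V (b 1)"
      using hK by blast
    then obtain ww where ww: "w = (\<lambda>j. if j < b 0 then matmul (b 1) (M 1) ww j else 0)" by blast
    have "w j = matmul (b 1) (M 1) ww j" using fun_cong[OF ww, of j] j by simp
    then have "Poly_Mapping.single 0 (\<alpha> j) = (\<Sum>k<b 1. M 1 j k * ww k)"
      using j by (simp add: w_def matmul_def)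
    then have "\<alpha> j = (\<Sum>k<b 1. Poly_Mapping.lookup (M 1 j k * ww k) 0)"
      by (metis lookup_single_eq lookup_sum)
    also have "\<dots> = 0"
    proof (rule sum.neutral, rule ballI)
      fix k
      have "0 \<notin> Poly_Mapping.keys (M 1 j k * ww k)"
      proof
        assume "0 \<in> Poly_Mapping.keys (M 1 j k * ww k)"
        then obtain a bb where "0 = a + bb" "a \<in> Poly_Mapping.keys (M 1 j k)" using keys_mult by blast
        then show False using homM mdeg_add[of a bb] by (metis add_is_0 mdeg_zero zero_neq_one)
      qed
      then show "Poly_Mapping.lookup (M 1 j k * ww k) 0 = 0" by (simp add: in_keys_iff)
    qed
    finally show ?thesis .
  qed
  have linsyz: "c j = 0"
    if c1: "\<forall>j<b 0. \<forall>m\<in>Poly_Mapping.keys (c j). mdeg m = 1" and sz: "(\<Sum>j<b 0. c j * g j) = 0"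
      and j: "j < b 0" for c j
  proof -
    have ce: "Poly_Mapping.lookup (c j) e = 0" if e1: "mdeg e = 1" for e
    proof -
      define \<alpha> where "\<alpha> j = Poly_Mapping.lookup (c j) e" for j
      have "(\<Sum>j<b 0. Poly_Mapping.single 0 (\<alpha> j) * g j) = 0"
      proof (rule poly_mapping_eqI)
        fix m
        have "Poly_Mapping.lookup (\<Sum>j<b 0. Poly_Mapping.single 0 (\<alpha> j) * g j) m
            = (\<Sum>j<b 0. \<alpha> j * Poly_Mapping.lookup (g j) m)"
          by (simp add: lookup_sum lookS)
        also have "\<dots> = 0"
        proof (cases "m \<in> mn ` T")
          case True
          then obtain q where q: "q \<in> T" "m = mn q" by blast
          have "(\<Sum>j<b 0. \<alpha> j * Poly_Mapping.lookup (g j) m) = (\<Sum>j<b 0. Poly_Mapping.lookup (c j * g j) (e + mn q))"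
            using lookE[OF _ gkeys q(1) e1] c1 q(2) by (auto simp: \<alpha>_def intro!: sum.cong)
          also have "\<dots> = Poly_Mapping.lookup (\<Sum>j<b 0. c j * g j) (e + mn q)" by (simp add: lookup_sum)
          finally show ?thesis using sz by simp
        next
          case False
          then have "Poly_Mapping.lookup (g j) m = 0" if "j < b 0" for j
            using gkeys[OF that] by (auto simp: in_keys_iff)
          then show ?thesis by simp
        qed
        finally show "Poly_Mapping.lookup (\<Sum>j<b 0. Poly_Mapping.single 0 (\<alpha> j) * g j) m = Poly_Mapping.lookup 0 m"
          by simp
      qed
      from indep[OF this j] show ?thesis by (simp add: \<alpha>_def)
    qed
    show ?thesis
    proof (rule poly_mapping_eqI)
      fix m show "Poly_Mapping.lookup (c j) m = Poly_Mapping.lookup 0 m"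
      proof (cases "m \<in> Poly_Mapping.keys (c j)")
        case True
        then have "mdeg m = 1" using c1 j by blast
        then show ?thesis using ce by simp
      next
        case False
        then show ?thesis by (simp add: in_keys_iff)
      qed
    qed
  qed
  have cols: "M 1 j k = 0" if j: "j < b 0" and k: "k < b 1" for j k
  proof -
    define ek where "ek = (\<lambda>k'. if k' = k then 1 else (0::('v, 'k) mpoly))"
    have ekf: "ek \<in> fvecs V (b 1)" using pol1 pol0 k by (auto simp: fvecs_def ek_def)
    have mm: "matmul (b 1) (M 1) ek j' = M 1 j' k" for j'
    proof -
      have "matmul (b 1) (M 1) ek j' = (\<Sum>k'<b 1. if k' = k then M 1 j' k' else 0)"
        unfolding matmul_def ek_def by (rule sum.cong) auto
      then show ?thesis using k by simp
    qed
    have "(\<lambda>j. if j < b 0 then matmul (b 1) (M 1) ek j else 0) \<in> {v \<in> fvecs V (b 0). (\<Sum>j<b 0. v j * g j) = 0}"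
      unfolding hK by (rule imageI[OF ekf])
    then have "(\<Sum>j<b 0. matmul (b 1) (M 1) ek j * g j) = 0" by simp
    then have "(\<Sum>j<b 0. M 1 j k * g j) = 0" by (simp only: mm)
    moreover have "\<forall>j<b 0. \<forall>m\<in>Poly_Mapping.keys (M 1 j k). mdeg m = 1" using homM by blast
    ultimately show ?thesis using linsyz[of "\<lambda>j. M 1 j k"] j by blast
  qed
  have kzero: "v = (\<lambda>_. 0)" if "v \<in> fvecs V (b 0)" "(\<Sum>j<b 0. v j * g j) = 0" for v
  proof -
    have "v \<in> (\<lambda>w. \<lambda>j. if j < b 0 then matmul (b 1) (M 1) w j else 0) ` fvecs V (b 1)"
      using hK that by blast
    then obtain ww where ww: "v = (\<lambda>j. if j < b 0 then matmul (b 1) (M 1) ww j else 0)" by blast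
    have z: "matmul (b 1) (M 1) ww j = 0" if "j < b 0" for j
      unfolding matmul_def using cols[OF that] by (intro sum.neutral) simp
    show ?thesis unfolding ww using z by (intro ext) auto
  qed
  have gnz: "g j \<noteq> 0" if j: "j < b 0" for j
  proof
    assume g0: "g j = 0"
    have "(\<Sum>j'<b 0. Poly_Mapping.single 0 (if j' = j then 1 else 0) * g j') = 0"
      by (rule sum.neutral) (auto simp: g0)
    from indep[OF this j] show False by simp
  qed
  have b2: "2 \<le> b 0"
  proof (rule ccontr)
    assume "\<not> 2 \<le> b 0"
    then consider "b 0 = 0" | "b 0 = 1" by linarith
    then show False
    proof cases
      case 1
      from gens[OF two(1)] hI obtain v where "Poly_Mapping.single (mn p) (1::'k) = (\<Sum>j<b 0. v j * g j)" by force
      then have "Poly_Mapping.lookup (Poly_Mapping.single (mn p) (1::'k)) (mn p) = 0" using 1 by simp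
      then show False by simp
    next
      case 2
      from gens[OF two(1)] hI obtain v where v: "Poly_Mapping.single (mn p) (1::'k) = v 0 * g 0"
        using 2 by force
      from gens[OF two(2)] hI obtain v' where v': "Poly_Mapping.single (mn p') (1::'k) = v' 0 * g 0"
        using 2 by force
      have gk: "Poly_Mapping.keys (g 0) \<subseteq> mn ` T" using gkeys 2 by simp
      have "1 = Poly_Mapping.lookup (v 0) 0 * Poly_Mapping.lookup (g 0) (mn p)"
        using arg_cong[OF v, of "\<lambda>f. Poly_Mapping.lookup f (mn p)"] lookD[OF gk two(1)] by simp
      then have nz: "Poly_Mapping.lookup (v 0) 0 \<noteq> 0" by auto
      have "0 = Poly_Mapping.lookup (v 0) 0 * Poly_Mapping.lookup (g 0) (mn p')"
        using arg_cong[OF v, of "\<lambda>f. Poly_Mapping.lookup f (mn p')"] lookD[OF gk two(2)] two(3) by (simp add: lookup_single when_def)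
      then have z: "Poly_Mapping.lookup (g 0) (mn p') = 0" using nz by simp
      have "1 = Poly_Mapping.lookup (v' 0) 0 * Poly_Mapping.lookup (g 0) (mn p')"
        using arg_cong[OF v', of "\<lambda>f. Poly_Mapping.lookup f (mn p')"] lookD[OF gk two(2)] by simp
      then show False using z by simp
    qed
  qed
  \<comment> \<open>(L) the Koszul syzygy\<close>
  define \<sigma> where "\<sigma> = (\<lambda>j::nat. if j = 0 then g 1 else if j = 1 then - g 0 else 0)"
  have "\<sigma> \<in> fvecs V (b 0)" using hg b2 pol0 polneg by (auto simp: fvecs_def \<sigma>_def)
  moreover have "(\<Sum>j<b 0. \<sigma> j * g j) = 0"
  proof -
    have "(\<Sum>j<b 0. \<sigma> j * g j) = (\<Sum>j\<in>{0,1}. \<sigma> j * g j)"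
      using b2 by (intro sum.mono_neutral_right) (auto simp: \<sigma>_def)
    also have "\<dots> = 0" by (simp add: \<sigma>_def mult.commute)
    finally show ?thesis .
  qed
  ultimately have "\<sigma> = (\<lambda>_. 0)" by (rule kzero)
  then have "g 1 = 0" by (metis \<sigma>_def)
  then show False using gnz b2 by simp
qed


definition mon :: "'a::{finite,order} \<Rightarrow> ('a + 'a) \<Rightarrow>\<^sub>0 nat" where
  "mon q = (\<Sum>p\<in>lideal q. Poly_Mapping.single (Inl p) 1) + (\<Sum>p\<in>join_irr - lideal q. Poly_Mapping.single (Inr p) 1)"

lemma prod_Var:
  "finite A \<Longrightarrow> (\<Prod>p\<in>A. (Var (f p) :: ('v, 'k::field) mpoly))
     = Poly_Mapping.single (\<Sum>p\<in>A. Poly_Mapping.single (f p) 1) 1"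
  by (induction A rule: finite_induct) (simp_all add: Var_def mult_single)

lemma u_mon_eq: "(u_mon q :: ('a::{finite,order} + 'a, 'k::field) mpoly) = Poly_Mapping.single (mon q) 1"
  unfolding u_mon_def mon_def by (simp add: prod_Var mult_single)

lemma lookup_mon_Inl: "Poly_Mapping.lookup (mon q) (Inl r) = (if r \<in> lideal q then 1 else 0)"
proof -
  have "Poly_Mapping.lookup (mon q) (Inl r) = (\<Sum>p\<in>lideal q. if p = r then 1 else 0)"
    unfolding mon_def by (simp add: lookup_add lookup_sum lookup_single when_def)
  then show ?thesis by simp
qed

lemma lookup_mon_Inr: "Poly_Mapping.lookup (mon q) (Inr r) = (if r \<in> join_irr - lideal q then 1 else 0)"
proof -
  have "Poly_Mapping.lookup (mon q) (Inr r) = (\<Sum>p\<in>join_irr - lideal q. if p = r then 1 else 0)"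
    unfolding mon_def by (simp add: lookup_add lookup_sum lookup_single when_def)
  then show ?thesis by (simp only: sum.delta' finite) simp
qed

lemma mdeg_mon: "mdeg (mon (q::'a::{finite,order})) = card (join_irr :: 'a set)"
proof -
  have sub: "lideal q \<subseteq> join_irr" by (auto simp: lideal_def)
  have "mdeg (mon q) = card (lideal q) + card (join_irr - lideal q)"
    unfolding mon_def by (simp add: mdeg_add mdeg_sum)
  also have "\<dots> = card (join_irr :: 'a set)"
    using sub by (simp add: card_Diff_subset card_mono)
  finally show ?thesis .
qed

lemma same_rank_lideal:
  fixes q q' :: "'a::{finite,lattice}"
  assumes "lrank q = lrank q'" "lideal q \<subseteq> lideal q'"
  shows "q = q'"
proof -
  have le: "q \<le> q'" using lideal_le assms(2) by blast
  show ?thesis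
  proof (rule ccontr)
    assume "q \<noteq> q'"
    then have "q < q'" using le by (simp add: less_le)
    then show False using lrank_mono assms(1) by fastforce
  qed
qed

lemma sep_mon:
  fixes q q' :: "'a::{finite,lattice}"
  assumes r: "lrank q = lrank q'" and ne: "mon q \<noteq> mon q'"
  shows "\<exists>x y. x \<noteq> y \<and> Poly_Mapping.lookup (mon q') x < Poly_Mapping.lookup (mon q) x
        \<and> Poly_Mapping.lookup (mon q') y < Poly_Mapping.lookup (mon q) y"
proof -
  have "q \<noteq> q'" using ne by auto
  then have n1: "\<not> lideal q \<subseteq> lideal q'" and n2: "\<not> lideal q' \<subseteq> lideal q"
    using same_rank_lideal[OF r] same_rank_lideal[OF r[symmetric]] by auto
  from n1 obtain x where x: "x \<in> lideal q" "x \<notin> lideal q'" by blast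
  from n2 obtain y where y: "y \<in> lideal q'" "y \<notin> lideal q" by blast
  have yj: "y \<in> join_irr" using y(1) by (simp add: lideal_def)
  show ?thesis
    by (rule exI[of _ "Inl x"], rule exI[of _ "Inr y"]) (simp add: lookup_mon_Inl lookup_mon_Inr x y yj)
qed

lemma Ikeys_H:
  assumes "f \<in> (H_ideal T :: ('a::{finite,order} + 'a, 'k::field) mpoly set)" "m \<in> Poly_Mapping.keys f"
  shows "\<exists>q\<in>T. \<exists>a. m = a + mon q"
proof -
  have "\<exists>G' c. f = (\<Sum>g\<in>G'. c g * g) \<and> finite G' \<and> G' \<subseteq> u_mon ` T \<and> (\<forall>g\<in>G'. c g \<in> polyring Svars)"
    using assms(1) unfolding H_ideal_def ideal_gen_def by (simp only: mem_Collect_eq)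
  then obtain G' c where G': "f = (\<Sum>g\<in>G'. c g * g)" "G' \<subseteq> u_mon ` T" by blast
  have "m \<in> (\<Union>g\<in>G'. Poly_Mapping.keys (c g * g))"
    using subsetD[OF keys_sum_sub[of "\<lambda>g. c g * g" G'] assms(2)[unfolded G'(1)]] .
  then obtain g where g: "g \<in> G'" "m \<in> Poly_Mapping.keys (c g * g)" by blast
  from g(1) G'(2) obtain q where q: "q \<in> T" "g = u_mon q" by blast
  from g(2) keys_mult obtain a bb where "m = a + bb" "bb \<in> Poly_Mapping.keys g" by blast
  then have "m = a + mon q" using q(2) by (simp add: u_mon_eq)
  then show ?thesis using q(1) by blast
qed

lemma gens_H:
  assumes "q \<in> T"
  shows "Poly_Mapping.single (mon q) 1 \<in> (H_ideal T :: ('a::{finite,order} + 'a, 'k::field) mpoly set)"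
proof -
  have p1: "(1::('a + 'a, 'k) mpoly) \<in> polyring Svars" by (simp add: polyring_def)
  have "u_mon q \<in> (H_ideal T :: ('a + 'a, 'k) mpoly set)"
    unfolding H_ideal_def ideal_gen_def mem_Collect_eq
    apply (rule exI[of _ "{u_mon q}"], rule exI[of _ "\<lambda>_. (1::('a + 'a, 'k) mpoly)"])
    using assms p1 by simp
  then show ?thesis by (simp add: u_mon_eq)
qed

theorem corollary3p15:
  fixes i :: int
  assumes "card {p :: 'a::{finite,distrib_lattice}. int (lrank p) = i} > 1"
  shows "\<not> has_linear_resolution (Svars :: ('a + 'a) set)
            (H_ideal {p :: 'a. int (lrank p) = i} :: ('a + 'a, 'k::field) mpoly set)"
proof
  let ?T = "{p :: 'a. int (lrank p) = i}"
  assume "has_linear_resolution (Svars :: ('a + 'a) set) (H_ideal ?T :: ('a + 'a, 'k::field) mpoly set)"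
  then obtain d :: nat and b :: "nat \<Rightarrow> nat" and g :: "nat \<Rightarrow> ('a + 'a, 'k) mpoly" and M :: "nat \<Rightarrow> nat \<Rightarrow> nat \<Rightarrow> ('a + 'a, 'k) mpoly" where
    hg: "\<forall>j<b 0. g j \<in> polyring Svars \<and> homog d (g j)" and
    hI: "{\<Sum>j<b 0. v j * g j | v. v \<in> fvecs Svars (b 0)} = H_ideal ?T" and
    hM: "\<forall>i\<ge>1. \<forall>j k. M i j k \<in> polyring Svars \<and> homog 1 (M i j k)" and
    hK: "{v \<in> fvecs Svars (b 0). (\<Sum>j<b 0. v j * g j) = 0}
          = (\<lambda>w. \<lambda>j. if j < b 0 then matmul (b 1) (M 1) w j else 0) ` fvecs Svars (b 1)"
    unfolding has_linear_resolution_def by (elim exE conjE) (rule that)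
  have "\<not> card ?T \<le> Suc 0" using assms by simp
  then have "\<not> (\<forall>a1\<in>?T. \<forall>a2\<in>?T. a1 = a2)" using card_le_Suc0_iff_eq[of ?T] by simp
  then obtain p p' where pp: "p \<in> ?T" "p' \<in> ?T" "p \<noteq> p'" by blast
  have "lideal p \<noteq> lideal p'"
  proof
    assume e: "lideal p = lideal p'"
    have "p \<le> p'" using lideal_le[of p p'] e by simp
    moreover have "p' \<le> p" using lideal_le[of p' p] e by simp
    ultimately show False using pp(3) by simp
  qed
  then obtain r where r: "(r \<in> lideal p \<and> r \<notin> lideal p') \<or> (r \<in> lideal p' \<and> r \<notin> lideal p)" by blast
  have mne: "mon p \<noteq> mon p'"
  proof
    assume "mon p = mon p'"
    then have "Poly_Mapping.lookup (mon p) (Inl r) = Poly_Mapping.lookup (mon p') (Inl r)" by simp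
    then show False using r by (auto simp: lookup_mon_Inl)
  qed
  have mdeg_mn: "\<And>q. q \<in> ?T \<Longrightarrow> mdeg (mon q) = card (join_irr :: 'a set)" by (rule mdeg_mon)
  have sep: "\<And>q q'. q \<in> ?T \<Longrightarrow> q' \<in> ?T \<Longrightarrow> mon q \<noteq> mon q' \<Longrightarrow>
      \<exists>x y. x \<noteq> y \<and> Poly_Mapping.lookup (mon q') x < Poly_Mapping.lookup (mon q) x
        \<and> Poly_Mapping.lookup (mon q') y < Poly_Mapping.lookup (mon q) y"
  proof -
    fix q q' assume a: "q \<in> ?T" "q' \<in> ?T" "mon q \<noteq> mon q'"
    then have "int (lrank q) = int (lrank q')" by simp
    then have "lrank q = lrank q'" by simp
    then show "\<exists>x y. x \<noteq> y \<and> Poly_Mapping.lookup (mon q') x < Poly_Mapping.lookup (mon q) x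
        \<and> Poly_Mapping.lookup (mon q') y < Poly_Mapping.lookup (mon q) y"
      using sep_mon a(3) by blast
  qed
  have Ik: "\<And>f m. f \<in> (H_ideal ?T :: ('a + 'a, 'k) mpoly set) \<Longrightarrow> m \<in> Poly_Mapping.keys f \<Longrightarrow> \<exists>q\<in>?T. \<exists>a. m = a + mon q"
    by (rule Ikeys_H)
  have gn: "\<And>q. q \<in> ?T \<Longrightarrow> Poly_Mapping.single (mon q) 1 \<in> (H_ideal ?T :: ('a + 'a, 'k) mpoly set)"
    by (rule gens_H)
  show False
    by (rule main_alg[OF mdeg_mn sep Ik gn pp(1) pp(2) mne hg hI hM hK])
qed

end
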